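(* Let $p\in\mathbb{D}\setminus\{0\}$ and let $\alpha_p(z)=\frac{p-z}{1-\overline{p}z}$. Consider $C_{\alpha_p}$ acting on $H^2(\mathbb{D})$ and its Hilbert space adjoint $C_{\alpha_p}^*$. Then: (i) for every $w=-\frac{p}{|p|}r$ with $0<r<1$, $$\frac{\|C_{\alpha_p}\kappa_w\|}{\|\kappa_w\|}\le\frac{\|C_{\alpha_p}^*\kappa_{-w}\|}{\|\kappa_{-w}\|};$$ (ii) for every $z\in\mathbb{D}$, $$\frac{\|C_{\alpha_p}^*\kappa_z\|}{\|\kappa_z\|}\le\frac{\|C_{\alpha_p}\kappa_{\alpha_p(z)}\|}{\|\kappa_{\alpha_p(z)}\|}.$$
   Context: $\mathbb{D}$ is the open unit disc; $H^2(\mathbb{D})$ is the Hardy space of holomorphic $f(z)=\sum a_nz^n$ with $\|f\|^2=\sum|a_n|^2<\infty$. For $w\in\mathbb{D}$, $\kappa_w(z)=\frac{1}{1-\overline{w}z}$ is the reproducing kernel of $H^2(\mathbb{D})$ at $w$, so $f(w)=\langle f,\kappa_w\rangle$ and $\|\kappa_w\|^2=(1-|w|^2)^{-1}$. $C_\varphi f=f\circ\varphi$. *)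

theory Defs
  imports "HOL-Complex_Analysis.Complex_Analysis"
begin

text \<open>The Hardy space H^2 of the unit disc, realised by Taylor coefficient sequences:
  f(z) = sum a_n z^n with sum |a_n|^2 finite.\<close>

definition H2 :: "(nat \<Rightarrow> complex) set" where
  "H2 = {a. summable (\<lambda>n. (cmod (a n))\<^sup>2)}"

definition h2_norm :: "(nat \<Rightarrow> complex) \<Rightarrow> real" where
  "h2_norm a = sqrt (\<Sum>n. (cmod (a n))\<^sup>2)"

definition h2_inner :: "(nat \<Rightarrow> complex) \<Rightarrow> (nat \<Rightarrow> complex) \<Rightarrow> complex" where
  "h2_inner a b = (\<Sum>n. a n * cnj (b n))"

definition h2_eval :: "(nat \<Rightarrow> complex) \<Rightarrow> complex \<Rightarrow> complex" where
  "h2_eval a z = (\<Sum>n. a n * z ^ n)"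

definition taylor_coeffs :: "(complex \<Rightarrow> complex) \<Rightarrow> nat \<Rightarrow> complex" where
  "taylor_coeffs g = (\<lambda>n. (deriv ^^ n) g 0 / of_nat (fact n))"

text \<open>Reproducing kernel kappa_w(z) = 1/(1 - conj(w) z) = sum conj(w)^n z^n.\<close>
definition kernel :: "complex \<Rightarrow> nat \<Rightarrow> complex" where
  "kernel w = (\<lambda>n. (cnj w) ^ n)"

definition comp_op :: "(complex \<Rightarrow> complex) \<Rightarrow> (nat \<Rightarrow> complex) \<Rightarrow> nat \<Rightarrow> complex" where
  "comp_op \<phi> a = taylor_coeffs (\<lambda>z. h2_eval a (\<phi> z))"

definition h2_adjoint :: "((nat \<Rightarrow> complex) \<Rightarrow> nat \<Rightarrow> complex) \<Rightarrow> (nat \<Rightarrow> complex) \<Rightarrow> nat \<Rightarrow> complex" where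
  "h2_adjoint T g = (THE h. h \<in> H2 \<and> (\<forall>f\<in>H2. h2_inner (T f) g = h2_inner f h))"

definition alpha :: "complex \<Rightarrow> complex \<Rightarrow> complex" where
  "alpha p z = (p - z) / (1 - cnj p * z)"

end

theory Submission
  imports Defs
begin

lemma ident: "cmod (1 - cnj p * z)^2 - cmod (p - z)^2 = (1 - cmod p^2) * (1 - cmod z^2)"
  by (simp only: cmod_power2) (simp add: power2_eq_square algebra_simps)

lemma nm1: "cmod p < 1 \<Longrightarrow> cmod z < 1 \<Longrightarrow> cmod (cnj p * z) < 1"
  using mult_strict_mono[of "cmod p" 1 "cmod z" 1] by (simp add: norm_mult)

lemma alpha_in: assumes "cmod p < 1" "cmod z < 1" shows "cmod (alpha p z) < 1"
proof -
  have "cmod (cnj p * z) < 1" using assms nm1 by simp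
  then have d: "1 - cnj p * z \<noteq> 0" by auto
  have "0 < (1 - cmod p^2) * (1 - cmod z^2)" using assms by (simp add: abs_square_less_1)
  then have "cmod (p - z)^2 < cmod (1 - cnj p * z)^2" using ident[of p z] by linarith
  then have "cmod (p - z) < cmod (1 - cnj p * z)" using power_less_imp_less_base by fastforce
  then show ?thesis using d by (simp add: alpha_def norm_divide divide_less_eq)
qed

lemma alpha_invol: assumes "cmod p < 1" "cmod z < 1" shows "alpha p (alpha p z) = z"
proof -
  have "cmod (cnj p * z) < 1" using assms nm1 by simp
  then have d: "1 - cnj p * z \<noteq> 0" by auto
  have "cmod (cnj p * p) < 1" using assms nm1 by simp
  then have e: "1 - cnj p * p \<noteq> 0" by (auto simp: mult.commute)
  have "1 - cnj p * ((p - z) / (1 - cnj p * z)) = (1 - cnj p * p) / (1 - cnj p * z)"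
    using d by (simp add: field_simps)
  moreover have "p - (p - z) / (1 - cnj p * z) = z * (1 - cnj p * p) / (1 - cnj p * z)"
    using d by (simp add: field_simps)
  ultimately show ?thesis using d e by (simp add: alpha_def)
qed

lemma kernel_H2: "cmod w < 1 \<Longrightarrow> (\<lambda>n. (cmod (kernel w n))\<^sup>2) sums (1 / (1 - cmod w ^ 2))"
proof -
  assume "cmod w < 1"
  then have "norm ((cmod w)^2) < 1" by (simp add: abs_square_less_1)
  from geometric_sums[OF this] show ?thesis
    by (simp add: kernel_def norm_power power_mult_distrib[symmetric] power_mult[symmetric] mult.commute)
qed

lemma H2_summable: assumes "a \<in> H2" "cmod z < 1" shows "summable (\<lambda>n. a n * z ^ n)"
proof -
  have s1: "summable (\<lambda>n. (cmod (a n))\<^sup>2)" using assms by (simp add: H2_def)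
  have "norm ((cmod z)^2) < 1" using assms by (simp add: abs_square_less_1)
  then have s2: "summable (\<lambda>n. ((cmod z)^2)^n)" by (rule summable_geometric)
  have "summable (\<lambda>n. ((cmod (a n))\<^sup>2 + ((cmod z)^2)^n) / 2)"
    using summable_add[OF s1 s2] by (intro summable_divide)
  moreover have "norm (a n * z ^ n) \<le> ((cmod (a n))\<^sup>2 + ((cmod z)^2)^n) / 2" for n
  proof -
    have e: "((cmod z)^2)^n = (cmod z^n)^2" by (metis power_mult mult.commute)
    have "0 \<le> (cmod (a n) - cmod z ^ n)^2" by simp
    then have "2 * (cmod (a n) * cmod z ^ n) \<le> (cmod (a n))^2 + (cmod z^n)^2"
      unfolding power2_diff by linarith
    then show ?thesis by (simp add: norm_mult norm_power e)
  qed
  ultimately show ?thesis by (rule summable_comparison_test')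
qed

lemma h2_eval_holo: assumes "a \<in> H2" shows "h2_eval a holomorphic_on ball 0 1"
  by (rule power_series_holomorphic[where a=a]) (use H2_summable[OF assms] in \<open>auto simp: h2_eval_def summable_sums\<close>)


lemma inner_kernel: "h2_inner a (kernel z) = h2_eval a z"
  by (simp add: h2_inner_def h2_eval_def kernel_def)

lemma alpha_holo: assumes "cmod p < 1" shows "alpha p holomorphic_on ball 0 1"
proof -
  have "1 - cnj p * z \<noteq> 0" if "z \<in> ball 0 1" for z
    using nm1[of p z] assms that by auto
  then show ?thesis unfolding alpha_def[abs_def] by (intro holomorphic_intros) auto
qed

lemma comp_eval: assumes "f \<in> H2" "cmod p < 1" "cmod z < 1"
  shows "h2_eval (comp_op (alpha p) f) z = h2_eval f (alpha p z)"
proof -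
  define g where "g = (\<lambda>z. h2_eval f (alpha p z))"
  have "(h2_eval f \<circ> alpha p) holomorphic_on ball 0 1"
    by (rule holomorphic_on_compose_gen[OF alpha_holo[OF assms(2)] h2_eval_holo[OF assms(1)]])
       (use alpha_in assms in auto)
  then have hg: "g holomorphic_on ball 0 1" by (simp add: g_def o_def)
  have "(\<lambda>n. (deriv ^^ n) g 0 / fact n * (z-0)^n) sums g z"
    by (rule holomorphic_power_series[OF hg]) (use assms in auto)
  then have "(\<lambda>n. comp_op (alpha p) f n * z^n) sums g z"
    by (simp add: comp_op_def taylor_coeffs_def g_def)
  then show ?thesis by (simp add: h2_eval_def g_def sums_iff)
qed

lemma kernel_in_H2: "cmod w < 1 \<Longrightarrow> kernel w \<in> H2"
  using kernel_H2 by (auto simp: H2_def sums_iff)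

lemma inner_delta: "h2_inner (\<lambda>n. if n = k then 1 else 0) h = cnj (h k)"
proof -
  have "(\<lambda>n. (if n = k then 1 else 0) * cnj (h n)) = (\<lambda>n. if n = k then cnj (h k) else 0)"
    by auto
  moreover have "(\<lambda>n. if n = k then cnj (h k) else 0) sums cnj (h k)"
    using sums_single[of k "\<lambda>_. cnj (h k)"] by simp
  ultimately show ?thesis by (simp add: h2_inner_def sums_iff)
qed

lemma delta_H2: "(\<lambda>n. if n = k then (1::complex) else 0) \<in> H2"
proof -
  have "(\<lambda>n. (cmod (if n = k then (1::complex) else 0))\<^sup>2) = (\<lambda>n. if n = k then 1 else 0)"
    by auto
  then show ?thesis by (simp add: H2_def)
qed

lemma adjoint_kernel: assumes "cmod p < 1" "cmod z < 1"
  shows "h2_adjoint (comp_op (alpha p)) (kernel z) = kernel (alpha p z)"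
  unfolding h2_adjoint_def
proof (rule the_equality)
  have key: "h2_inner (comp_op (alpha p) f) (kernel z) = h2_inner f (kernel (alpha p z))" if "f \<in> H2" for f
    using comp_eval[OF that assms] by (simp add: inner_kernel)
  show "kernel (alpha p z) \<in> H2 \<and> (\<forall>f\<in>H2. h2_inner (comp_op (alpha p) f) (kernel z) = h2_inner f (kernel (alpha p z)))"
    using key kernel_in_H2 alpha_in assms by auto
  fix h assume h: "h \<in> H2 \<and> (\<forall>f\<in>H2. h2_inner (comp_op (alpha p) f) (kernel z) = h2_inner f h)"
  show "h = kernel (alpha p z)"
  proof
    fix k
    have "cnj (h k) = cnj (kernel (alpha p z) k)"
      using h key[OF delta_H2[of k]] delta_H2[of k] by (simp add: inner_delta)
    then show "h k = kernel (alpha p z) k" by simp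
  qed
qed


lemma comp_kernel:
  assumes p: "cmod p < 1" and w: "cmod w < 1"
  defines "d \<equiv> 1 - cnj w * p"
  defines "c \<equiv> (cnj p - cnj w) / d"
  defines "K \<equiv> (c - cnj p) / d"
  shows "comp_op (alpha p) (kernel w) = (\<lambda>n. if n = 0 then 1 / d else K * c ^ (n - 1))"
    and "d \<noteq> 0" and "cmod c < 1"
proof -
  define b where "b = (\<lambda>n. if n = 0 then 1 / d else K * c ^ (n - 1))"
  have "cmod (cnj w * p) < 1" using nm1[of w p] p w by simp
  then show d0: "d \<noteq> 0" unfolding d_def by auto
  have "c = cnj (alpha p w)" by (simp add: c_def d_def alpha_def mult.commute)
  then show c1: "cmod c < 1" using alpha_in[OF p w] by simp
  define g where "g = (\<lambda>z. h2_eval (kernel w) (alpha p z))"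
  have sums_b: "(\<lambda>n. b n * z^n) sums g z" if z: "z \<in> ball 0 1" for z
  proof -
    have z1: "cmod z < 1" using z by simp
    have n1: "1 - cnj p * z \<noteq> 0" using nm1[OF p z1] by auto
    have cz: "cmod (c * z) < 1" using c1 z1 mult_strict_mono[of "cmod c" 1 "cmod z" 1] by (simp add: norm_mult)
    then have n2: "1 - c * z \<noteq> 0" by auto
    have a1: "cmod (alpha p z) < 1" using alpha_in[OF p z1] .
    have wa: "cmod (cnj w * alpha p z) < 1" using nm1[OF w a1] by simp
    then have n3: "1 - cnj w * alpha p z \<noteq> 0" by auto
    have "(\<lambda>n. kernel w n * (alpha p z)^n) sums (1 / (1 - cnj w * alpha p z))"
      using geometric_sums[OF wa] by (simp add: kernel_def power_mult_distrib)
    then have gz: "g z = 1 / (1 - cnj w * alpha p z)" by (simp add: g_def h2_eval_def sums_iff)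
    have "(\<lambda>n. (K * z) * (c * z)^n) sums ((K * z) * (1 / (1 - c * z)))"
      by (rule sums_mult[OF geometric_sums[OF cz]])
    then have "(\<lambda>n. b (Suc n) * z ^ (Suc n)) sums ((K * z) * (1 / (1 - c * z)))"
      by (simp add: b_def power_mult_distrib algebra_simps)
    then have S: "(\<lambda>n. b n * z^n) sums ((K * z) * (1 / (1 - c * z)) + 1 / d)"
      by (subst (asm) sums_Suc_iff) (simp add: b_def)
    have cd: "c * d = cnj p - cnj w" using d0 by (simp add: c_def)
    have Kd: "K * d = c - cnj p" using d0 by (simp add: K_def)
    have e1: "1 - cnj w * alpha p z = (d - c * d * z) / (1 - cnj p * z)"
      unfolding cd using n1 by (simp add: alpha_def d_def field_simps)
    have e2: "d - c * d * z = d * (1 - c * z)" by (simp add: algebra_simps)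
    have "(K * z) * (1 / (1 - c * z)) + 1 / d = (K * d * z + (1 - c * z)) / (d * (1 - c * z))"
      using d0 n2 by (simp add: field_simps)
    also have "\<dots> = (1 - cnj p * z) / (d * (1 - c * z))"
      unfolding Kd by (simp add: algebra_simps)
    also have "\<dots> = 1 / (1 - cnj w * alpha p z)"
      unfolding e1 e2 using n1 by simp
    finally have "(K * z) * (1 / (1 - c * z)) + 1 / d = 1 / (1 - cnj w * alpha p z)" .
    moreover
    ultimately show ?thesis using gz S by simp
  qed
  have "g has_fps_expansion Abs_fps b"
  proof (rule has_fps_expansionI)
    have "eventually (\<lambda>z. z \<in> ball 0 1) (nhds (0::complex))"
      by (rule eventually_nhds_in_open) auto
    then show "eventually (\<lambda>u. (\<lambda>n. fps_nth (Abs_fps b) n * u ^ n) sums g u) (nhds 0)"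
      by (rule eventually_mono) (use sums_b in simp)
  qed
  from fps_nth_fps_expansion[OF this]
  have "\<And>n. b n = (deriv ^^ n) g 0 / fact n" by simp
  then show "comp_op (alpha p) (kernel w) = (\<lambda>n. if n = 0 then 1 / d else K * c ^ (n - 1))"
    by (auto simp: comp_op_def taylor_coeffs_def g_def b_def[symmetric])
qed


lemma comp_kernel_norm2:
  assumes p: "cmod p < 1" and w: "cmod w < 1"
  shows "h2_norm (comp_op (alpha p) (kernel w))
         = sqrt ((1 - cmod w^2 * cmod p^2) / (cmod (1 - cnj p * w)^2 * (1 - cmod w^2)))"
proof -
  define d where "d = 1 - cnj w * p"
  define c where "c = (cnj p - cnj w) / d"
  define K where "K = (c - cnj p) / d"
  have eq: "comp_op (alpha p) (kernel w) = (\<lambda>n. if n = 0 then 1 / d else K * c ^ (n - 1))"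
    and d0: "d \<noteq> 0" and c1: "cmod c < 1"
    using comp_kernel[OF p w] unfolding d_def c_def K_def by auto
  define b where "b = (\<lambda>n. if n = 0 then 1 / d else K * c ^ (n - 1))"
  have c2: "norm ((cmod c)^2) < 1" using c1 by (simp add: abs_square_less_1)
  have "(\<lambda>n. cmod K ^ 2 * ((cmod c)^2)^n) sums (cmod K ^ 2 * (1 / (1 - (cmod c)^2)))"
    by (rule sums_mult[OF geometric_sums[OF c2]])
  then have "(\<lambda>n. (cmod (b (Suc n)))^2) sums (cmod K ^ 2 * (1 / (1 - (cmod c)^2)))"
    by (simp add: b_def norm_mult norm_power power_mult_distrib power_mult[symmetric] mult.commute)
  then have S: "(\<lambda>n. (cmod (b n))^2) sums (cmod K ^ 2 * (1 / (1 - (cmod c)^2)) + 1 / cmod d ^ 2)"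
    by (subst (asm) sums_Suc_iff) (simp add: b_def norm_divide power_one_over)
  define P where "P = cmod p ^ 2"
  define W where "W = cmod w ^ 2"
  define D where "D = cmod d ^ 2"
  define Q where "Q = cmod (p - w) ^ 2"
  have Dd: "cmod d = cmod (1 - cnj p * w)"
  proof -
    have "d = cnj (1 - cnj p * w)" by (simp add: d_def mult.commute)
    then show ?thesis by (simp only: complex_mod_cnj)
  qed
  have D0: "D > 0" using d0 by (simp add: D_def)
  have P1: "P < 1" using p by (simp add: P_def abs_square_less_1)
  have W1: "W < 1" using w by (simp add: W_def abs_square_less_1)
  have iden: "D - Q = (1 - P) * (1 - W)"
    using ident[of p w] by (simp add: D_def Q_def P_def W_def Dd)
  have cc: "(cmod c)^2 = Q / D"
  proof -
    have "cnj p - cnj w = cnj (p - w)" by simp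
    then have "cmod (cnj p - cnj w) = cmod (p - w)" by (simp only: complex_mod_cnj)
    then show ?thesis by (simp add: c_def norm_divide Q_def D_def power_divide)
  qed
  have pp: "1 - cnj p * p = complex_of_real (1 - P)"
    using complex_norm_square[of p] by (simp add: P_def mult.commute)
  have KK: "K = - cnj w * (1 - cnj p * p) / d^2"
    using d0 by (simp add: K_def c_def d_def field_simps power2_eq_square)
  have "cmod K = cmod w * (1 - P) / cmod d ^ 2"
  proof -
    have pn: "cmod (1 - complex_of_real P) = 1 - P"
      using P1 by (metis abs_of_pos diff_gt_0_iff_gt norm_of_real of_real_1 of_real_diff)
    show ?thesis unfolding KK pp using pn by (simp add: norm_mult norm_divide norm_power)
  qed
  then have KK2: "(cmod K)^2 = W * (1 - P)^2 / D^2"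
    by (simp add: W_def D_def power_divide power_mult_distrib power2_eq_square)
  have "cmod K ^ 2 * (1 / (1 - (cmod c)^2)) + 1 / cmod d ^ 2
        = W * (1 - P)^2 / D^2 * (D / ((1 - P) * (1 - W))) + 1 / D"
  proof -
    have "1 - (cmod c)^2 = (1 - P) * (1 - W) / D" unfolding cc using D0 iden by (simp add: field_simps)
    then show ?thesis using D0 by (simp add: KK2 D_def)
  qed
  also have "\<dots> = (1 - W * P) / (D * (1 - W))"
  proof -
    have n: "1 - P \<noteq> 0" "1 - W \<noteq> 0" "D \<noteq> 0" using D0 P1 W1 by auto
    have "W * (1 - P)^2 / D^2 * (D / ((1 - P) * (1 - W))) = W * (1 - P) / (D * (1 - W))"
      using n by (simp add: power2_eq_square)
    also have "\<dots> + 1 / D = (1 - W * P) / (D * (1 - W))"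
      using n by (simp add: field_simps)
    finally show ?thesis .
  qed
  finally have val: "cmod K ^ 2 * (1 / (1 - (cmod c)^2)) + 1 / cmod d ^ 2 = (1 - W * P) / (D * (1 - W))" .
  have nn: "0 \<le> (1 - W * P) / (D * (1 - W))"
    using D0 P1 W1 by (intro divide_nonneg_pos) (auto simp: W_def P_def mult_le_one)
  have "h2_norm (comp_op (alpha p) (kernel w)) = sqrt ((1 - W * P) / (D * (1 - W)))"
    unfolding h2_norm_def eq b_def[symmetric] using S val by (simp add: sums_iff)
  then show ?thesis by (simp add: W_def P_def D_def Dd)
qed


lemma kernel_norm: "cmod w < 1 \<Longrightarrow> h2_norm (kernel w) = sqrt (1 / (1 - cmod w ^ 2))"
  using kernel_H2[of w] by (simp add: h2_norm_def sums_iff)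

lemma ratioC:
  assumes p: "cmod p < 1" and w: "cmod w < 1"
  shows "h2_norm (comp_op (alpha p) (kernel w)) / h2_norm (kernel w)
         = sqrt ((1 - cmod w^2 * cmod p^2) / cmod (1 - cnj p * w)^2)"
proof -
  have W1: "cmod w ^ 2 < 1" using w by (simp add: abs_square_less_1)
  have n1: "cmod (1 - cnj p * w)^2 \<noteq> 0" using nm1[OF p w] by auto
  have "(1 - cmod w^2 * cmod p^2) / (cmod (1 - cnj p * w)^2 * (1 - cmod w^2)) / (1 / (1 - cmod w ^ 2))
      = (1 - cmod w^2 * cmod p^2) / cmod (1 - cnj p * w)^2"
    using W1 n1 by (simp add: field_simps)
  then show ?thesis by (simp add: comp_kernel_norm2[OF p w] kernel_norm[OF w] real_sqrt_divide[symmetric])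
qed

lemma aux: "(x::real) \<noteq> 0 \<Longrightarrow> y \<noteq> 0 \<Longrightarrow> N \<noteq> 0 \<Longrightarrow> (1 / (x * y / N)) / (1 / y) = N / x"
  by (simp add: field_simps)

lemma ratioA:
  assumes p: "cmod p < 1" and z: "cmod z < 1"
  shows "h2_norm (h2_adjoint (comp_op (alpha p)) (kernel z)) / h2_norm (kernel z)
         = sqrt (cmod (1 - cnj p * z)^2 / (1 - cmod p ^ 2))"
proof -
  have a1: "cmod (alpha p z) < 1" by (rule alpha_in[OF p z])
  have Z1: "cmod z ^ 2 < 1" using z by (simp add: abs_square_less_1)
  have P1: "cmod p ^ 2 < 1" using p by (simp add: abs_square_less_1)
  have n1: "1 - cnj p * z \<noteq> 0" using nm1[OF p z] by auto
  define N where "N = cmod (1 - cnj p * z)^2"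
  define Q where "Q = cmod (p - z)^2"
  have N0: "N > 0" using n1 by (simp add: N_def)
  have e: "cmod (alpha p z)^2 = Q / N"
    by (simp add: alpha_def norm_divide power_divide N_def Q_def)
  have NQ: "N - Q = (1 - cmod p^2) * (1 - cmod z^2)" using ident[of p z] by (simp add: N_def Q_def)
  have "1 - cmod (alpha p z)^2 = (N - Q) / N" using N0 by (simp add: e field_simps)
  then have "1 - cmod (alpha p z)^2 = (1 - cmod p^2) * (1 - cmod z^2) / N"
    by (simp only: NQ)
  then have "(1 / (1 - cmod (alpha p z) ^ 2)) / (1 / (1 - cmod z ^ 2)) = N / (1 - cmod p ^ 2)"
    using Z1 P1 N0 aux[of "1 - cmod p ^ 2" "1 - cmod z ^ 2" N] by simp
  then have "(1 / (1 - cmod (alpha p z) ^ 2)) / (1 / (1 - cmod z ^ 2)) = cmod (1 - cnj p * z)^2 / (1 - cmod p ^ 2)"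
    by (simp only: N_def)
  then show ?thesis
    by (simp add: adjoint_kernel[OF p z] kernel_norm[OF a1] kernel_norm[OF z] real_sqrt_divide[symmetric])
qed


lemma partii:
  assumes p: "cmod p < 1" and z: "cmod z < 1"
  shows "h2_norm (h2_adjoint (comp_op (alpha p)) (kernel z)) / h2_norm (kernel z)
         \<le> h2_norm (comp_op (alpha p) (kernel (alpha p z))) / h2_norm (kernel (alpha p z))"
proof -
  define w where "w = alpha p z"
  have w1: "cmod w < 1" unfolding w_def by (rule alpha_in[OF p z])
  define N where "N = cmod (1 - cnj p * z)^2"
  define Q where "Q = cmod (p - z)^2"
  define P where "P = cmod p ^ 2"
  define Z where "Z = cmod z ^ 2"
  have n1: "1 - cnj p * z \<noteq> 0" using nm1[OF p z] by auto
  have N0: "N > 0" using n1 by (simp add: N_def)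
  have P1: "P < 1" "0 \<le> P" using p by (auto simp: P_def abs_square_less_1)
  have Z1: "Z < 1" using z by (simp add: Z_def abs_square_less_1)
  have NQ: "N - Q = (1 - P) * (1 - Z)" using ident[of p z] by (simp add: N_def Q_def P_def Z_def)
  have QN: "Q \<le> N" using NQ P1 Z1 by (smt (verit) mult_nonneg_nonneg)
  have ww: "cmod w ^ 2 = Q / N"
    by (simp add: w_def alpha_def norm_divide power_divide N_def Q_def)
  have pp: "1 - cnj p * p = complex_of_real (1 - P)"
    using complex_norm_square[of p] by (simp add: P_def mult.commute)
  have "1 - cnj p * w = (1 - cnj p * p) / (1 - cnj p * z)"
    using n1 by (simp add: w_def alpha_def field_simps)
  then have "cmod (1 - cnj p * w) = (1 - P) / cmod (1 - cnj p * z)"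
  proof -
    have pn: "cmod (1 - complex_of_real P) = 1 - P"
      using P1 by (metis abs_of_pos diff_gt_0_iff_gt norm_of_real of_real_1 of_real_diff)
    show ?thesis using pn \<open>1 - cnj p * w = _\<close> by (simp add: pp norm_divide)
  qed
  then have cw: "cmod (1 - cnj p * w)^2 = (1 - P)^2 / N"
    by (simp add: N_def power_divide)
  have "N / (1 - P) \<le> (1 - Q / N * P) / ((1 - P)^2 / N)"
  proof -
    have "P * Q \<le> P * N" by (rule mult_left_mono[OF QN P1(2)])
    then have "N * (1 - P) \<le> N - P * Q"
      by (simp add: algebra_simps)
    then have "N * (1 - P) / (1 - P)^2 \<le> (N - P * Q) / (1 - P)^2"
      by (rule divide_right_mono) simp
    moreover have "N * (1 - P) / (1 - P)^2 = N / (1 - P)"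
      using P1 by (simp add: power2_eq_square)
    ultimately have "N / (1 - P) \<le> (N - P * Q) / (1 - P)^2" by simp
    also have "\<dots> = (1 - Q / N * P) / ((1 - P)^2 / N)"
    proof -
      have "N \<noteq> 0" "(1 - P)^2 \<noteq> 0" using N0 P1 by auto
      then show ?thesis by (simp add: divide_simps)
    qed
    finally show ?thesis .
  qed
  then have "sqrt (cmod (1 - cnj p * z)^2 / (1 - cmod p ^ 2)) \<le> sqrt ((1 - cmod w^2 * cmod p^2) / cmod (1 - cnj p * w)^2)"
    unfolding cw ww by (simp add: N_def P_def)
  then show ?thesis
    unfolding ratioA[OF p z] ratioC[OF p w1, unfolded w_def] w_def .
qed


lemma real_ineq:
  fixes s r :: real assumes "0 < s" "s < 1" "0 < r" "r < 1"
  shows "(1 - r^2 * s^2) / (1 + s * r)^2 \<le> (1 - s * r)^2 / (1 - s^2)"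
proof -
  have sr: "s * r < 1" "0 < s * r" using assms mult_strict_mono[of s 1 r 1] by auto
  have s2: "s^2 < 1" using assms by (simp add: abs_square_less_1)
  have r2: "s^2 * r^2 \<le> s^2" using assms by (simp add: mult_le_one power_le_one)
  have "(1 - s*r) * (1 - s^2) \<le> (1 - s*r) * (1 - s^2*r^2)"
    using sr r2 by (intro mult_left_mono) auto
  also have "\<dots> = (1 - s*r)^2 * (1 + s*r)" by (simp add: power2_eq_square algebra_simps)
  finally have A: "(1 - s*r) * (1 - s^2) \<le> (1 - s*r)^2 * (1 + s*r)" .
  have e: "(1 - r^2 * s^2) / (1 + s * r)^2 = (1 - s*r) / (1 + s*r)"
  proof -
    have "1 - r^2 * s^2 = (1 - s*r) * (1 + s*r)" by (simp add: algebra_simps power2_eq_square)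
    moreover have "(1 + s * r)^2 = (1 + s*r) * (1 + s*r)" by (simp add: power2_eq_square)
    ultimately show ?thesis using sr by simp
  qed
  show ?thesis unfolding e using A sr s2
    by (simp add: divide_le_eq le_divide_eq mult.commute mult.left_commute)
qed

lemma parti:
  assumes p: "cmod p < 1" and p0: "p \<noteq> 0" and r: "0 < r" "r < 1"
  defines "w \<equiv> - (p / of_real (cmod p)) * of_real r"
  shows "h2_norm (comp_op (alpha p) (kernel w)) / h2_norm (kernel w)
         \<le> h2_norm (h2_adjoint (comp_op (alpha p)) (kernel (- w))) / h2_norm (kernel (- w))"
proof -
  define s where "s = cmod p"
  have s0: "0 < s" "s < 1" using p p0 by (auto simp: s_def)
  have wn: "cmod w = r" using s0 r by (simp add: w_def norm_mult norm_divide s_def)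
  have w1: "cmod w < 1" "cmod (- w) < 1" using wn r by auto
  have pp: "cnj p * p = complex_of_real (s^2)"
    using complex_norm_square[of p] by (simp add: s_def mult.commute)
  have cw: "cnj p * w = - complex_of_real (s * r)"
  proof -
    have "cnj p * w = - (cnj p * p) / complex_of_real s * complex_of_real r"
      by (simp add: w_def s_def)
    also have "\<dots> = - complex_of_real (s * r)" unfolding pp using s0 by (simp add: power2_eq_square)
    finally show ?thesis .
  qed
  have d1: "cmod (1 - cnj p * w) = 1 + s * r"
  proof -
    have eq: "1 - cnj p * w = complex_of_real (1 + s * r)" by (simp add: cw)
    show ?thesis unfolding eq norm_of_real using s0 r by simp
  qed
  have d2: "cmod (1 - cnj p * (- w)) = 1 - s * r"
  proof -
    have sr: "s * r < 1" using s0 r mult_strict_mono[of s 1 r 1] by auto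
    have eq: "1 - cnj p * (- w) = complex_of_real (1 - s * r)" by (simp add: cw)
    show ?thesis unfolding eq norm_of_real using sr by simp
  qed
  show ?thesis
    unfolding ratioC[OF p w1(1)] ratioA[OF p w1(2)] d1 d2 wn s_def[symmetric]
    by (rule real_sqrt_le_mono, rule real_ineq) (use s0 r in auto)
qed

theorem proposition2p3:
  fixes p :: complex
  assumes "p \<in> ball 0 1" and "p \<noteq> 0"
  shows "(\<forall>r::real. 0 < r \<and> r < 1 \<longrightarrow>
           (let w = - (p / of_real (cmod p)) * of_real r in
              h2_norm (comp_op (alpha p) (kernel w)) / h2_norm (kernel w)
                \<le> h2_norm (h2_adjoint (comp_op (alpha p)) (kernel (- w))) / h2_norm (kernel (- w)))) \<and>
         (\<forall>z\<in>ball 0 1.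
           h2_norm (h2_adjoint (comp_op (alpha p)) (kernel z)) / h2_norm (kernel z)
             \<le> h2_norm (comp_op (alpha p) (kernel (alpha p z))) / h2_norm (kernel (alpha p z)))"
proof -
  have p: "cmod p < 1" using assms by simp
  show ?thesis using parti[OF p assms(2)] partii[OF p] by (auto simp: Let_def)
qed

end
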